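(* Run WSU-UX with $K=2$ and any valid $(\eta,\gamma)$ on the two-phase loss sequence. Let $t_0>T_1$ be a round with $0<\pi_{t_0,1}\le\frac14$. Suppose arm 2 is pulled (i.e. $I_s=2$) in rounds $t_1<t_2<\dots<t_m$ with $t_0\le t_1$ and $t_m\le T$, where $m\ge \frac{2}{\eta}\cdot\frac{1}{1-2\pi_{t_0,1}}$. Then $\pi_{t_m+1,1}\ge 2\pi_{t_0,1}$.
   Context: WSU-UX. Fix integers $K\ge 2$ and $T\ge 1$ and hyperparameters $\eta,\gamma$. The pair $(\eta,\gamma)$ is called valid if $\eta,\gamma\in(0,1/2)$ and $\eta K/\gamma\le 1/2$. Given a fixed loss sequence $\ell_t\in[0,1]^K$, WSU-UX sets $\pi_{1,i}=1/K$ and in each round $t$: forms $\tilde\pi_{t,i}=(1-\gamma)\pi_{t,i}+\gamma/K$; draws $I_t$ with $\Pr(I_t=i\mid\mathcal F_{t-1})=\tilde\pi_{t,i}$; sets $\hat\ell_{t,i}=\ell_{t,i}\mathbf 1[I_t=i]/\tilde\pi_{t,i}$; and updates $\pi_{t+1,i}=\pi_{t,i}\bigl(1-\eta(\hat\ell_{t,i}-\sum_{j}\pi_{t,j}\hat\ell_{t,j})\bigr)$; $\mathcal F_t$ is the history generated by $I_1,\dots,I_t$. Two-phase loss sequence ($K=2$, $T$ a multiple of $100$, $T_1=T/100$): $\ell_{t,1}=1,\ell_{t,2}=0$ for $1\le t\le T_1$ and $\ell_{t,1}=0,\ell_{t,2}=1$ for $T_1<t\le T$. (For $t>T_1$, rounds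 in which arm 1 is pulled leave $\pi_t$ unchanged.) *)

theory Defs
  imports Complex_Main
begin

text \<open>Loss sequence: ell t i (round t, arm i).
  The realized arm sequence is I t (arm pulled in round t).
  wsu_pi K eta gamma ell I t i is pi_{t,i} for t >= 1 (index 0 is a dummy, equal to pi_1).\<close>

definition wsu_mix :: "nat \<Rightarrow> real \<Rightarrow> (nat \<Rightarrow> real) \<Rightarrow> nat \<Rightarrow> real" where
  "wsu_mix K gamma p i = (1 - gamma) * p i + gamma / real K"

definition wsu_lhat :: "nat \<Rightarrow> real \<Rightarrow> (nat \<Rightarrow> nat \<Rightarrow> real) \<Rightarrow> (nat \<Rightarrow> nat)
    \<Rightarrow> (nat \<Rightarrow> real) \<Rightarrow> nat \<Rightarrow> nat \<Rightarrow> real" where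
  "wsu_lhat K gamma ell I p t i =
     ell t i * (if I t = i then 1 else 0) / wsu_mix K gamma p i"

fun wsu_pi :: "nat \<Rightarrow> real \<Rightarrow> real \<Rightarrow> (nat \<Rightarrow> nat \<Rightarrow> real) \<Rightarrow> (nat \<Rightarrow> nat)
    \<Rightarrow> nat \<Rightarrow> nat \<Rightarrow> real" where
  "wsu_pi K eta gamma ell I 0 = (\<lambda>i. 1 / real K)"
| "wsu_pi K eta gamma ell I (Suc t) =
     (if t = 0 then (\<lambda>i. 1 / real K)
      else (let p = wsu_pi K eta gamma ell I t;
                lh = wsu_lhat K gamma ell I p t
            in (\<lambda>i. p i * (1 - eta * (lh i - (\<Sum>j\<in>{1..K}. p j * lh j))))))"

definition valid_params :: "nat \<Rightarrow> real \<Rightarrow> real \<Rightarrow> bool" where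
  "valid_params K eta gamma \<longleftrightarrow>
     0 < eta \<and> eta < 1/2 \<and> 0 < gamma \<and> gamma < 1/2 \<and> eta * real K / gamma \<le> 1/2"

text \<open>Two-phase loss sequence for K = 2, T_1 = T div 100.\<close>
definition two_phase_loss :: "nat \<Rightarrow> nat \<Rightarrow> nat \<Rightarrow> real" where
  "two_phase_loss T t i =
     (if t \<le> T div 100 then (if i = 1 then 1 else 0) else (if i = 1 then 0 else 1))"

end

theory Submission
  imports Defs
begin

lemma step2:
  fixes t :: nat assumes "t \<ge> 1"
  shows "wsu_pi 2 eta gamma ell I (Suc t) i =
    wsu_pi 2 eta gamma ell I t i * (1 - eta * (wsu_lhat 2 gamma ell I (wsu_pi 2 eta gamma ell I t) t i
      - (wsu_pi 2 eta gamma ell I t 1 * wsu_lhat 2 gamma ell I (wsu_pi 2 eta gamma ell I t) t 1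
       + wsu_pi 2 eta gamma ell I t 2 * wsu_lhat 2 gamma ell I (wsu_pi 2 eta gamma ell I t) t 2)))"
proof -
  have "{1..2::nat} = {1,2}" by auto
  then show ?thesis using assms by (simp add: Let_def)
qed

lemma lhat: "wsu_lhat 2 gamma ell I p t i = (if I t = i then ell t i / ((1-gamma) * p i + gamma/2) else 0)"
  by (simp add: wsu_lhat_def wsu_mix_def)

lemma alg1:
  fixes p q eta gamma x :: real
  assumes "p \<ge> 0" "q \<ge> 0" "p + q = 1" "0 < eta" "0 < gamma" "gamma < 1/2" "eta * 2 / gamma \<le> 1/2"
    and "x = (1-gamma) * p + gamma/2"
  shows "p * (1 - eta * (1/x - p * (1/x))) \<ge> 0 \<and> q * (1 - eta * (0 - p * (1/x))) \<ge> 0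
     \<and> p * (1 - eta * (1/x - p * (1/x))) + q * (1 - eta * (0 - p * (1/x))) = 1"
proof -
  have xp: "x \<ge> gamma/2" using assms by (simp add: mult_nonneg_nonneg)
  have e: "eta \<le> gamma/4" using assms by (simp add: field_simps)
  have "eta * q / x \<le> 1"
  proof -
    have "eta * q \<le> eta" using assms by (simp add: mult_left_le)
    also have "\<dots> \<le> x" using xp e assms by linarith
    finally have "eta * q \<le> x" .
    moreover have "x > 0" using xp assms by linarith
    ultimately show ?thesis by (simp add: pos_divide_le_eq)
  qed
  moreover have "eta * (1/x - p * (1/x)) = eta * q / x"
    using assms(3) by (simp add: diff_divide_distrib[symmetric] eq_diff_eq[symmetric])
  ultimately have a: "1 - eta * (1/x - p * (1/x)) \<ge> 0" by simp
  have b: "1 - eta * (0 - p * (1/x)) \<ge> 0" using assms xp by simp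
  have c: "p * (1 - eta * (1/x - p * (1/x))) + q * (1 - eta * (0 - p * (1/x))) = p + q"
  proof -
    have "eta * (1/x - p * (1/x)) = eta * q / x"
      using assms(3) by (simp add: diff_divide_distrib[symmetric] eq_diff_eq[symmetric])
    then have "p * (1 - eta * (1/x - p * (1/x))) + q * (1 - eta * (0 - p * (1/x)))
       = p * (1 - eta * q / x) + q * (1 + eta * p / x)" by simp
    also have "\<dots> = p + q" by (simp add: algebra_simps)
    finally show ?thesis .
  qed
  show ?thesis using a b c assms(1,2,3) by simp
qed

lemma inv:
  assumes v: "valid_params 2 eta gamma" and I: "\<forall>t. I t \<in> {1, 2}"
  shows "wsu_pi 2 eta gamma (two_phase_loss T) I t 1 \<ge> 0 \<and> wsu_pi 2 eta gamma (two_phase_loss T) I t 2 \<ge> 0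
     \<and> wsu_pi 2 eta gamma (two_phase_loss T) I t 1 + wsu_pi 2 eta gamma (two_phase_loss T) I t 2 = 1"
proof (induction t)
  case 0
  then show ?case by simp
next
  case (Suc t)
  let ?P = "wsu_pi 2 eta gamma (two_phase_loss T) I"
  show ?case
  proof (cases "t = 0")
    case True
    then show ?thesis by simp
  next
    case False
    hence t1: "t \<ge> 1" by simp
    define p where "p = ?P t 1"
    define q where "q = ?P t 2"
    define l1 where "l1 = wsu_lhat 2 gamma (two_phase_loss T) I (?P t) t 1"
    define l2 where "l2 = wsu_lhat 2 gamma (two_phase_loss T) I (?P t) t 2"
    have pq: "p \<ge> 0" "q \<ge> 0" "p + q = 1" using Suc.IH p_def q_def by auto
    have vv: "0 < eta" "0 < gamma" "gamma < 1/2" "eta * 2 / gamma \<le> 1/2" using v by (auto simp: valid_params_def)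
    have A1: "?P (Suc t) 1 = p * (1 - eta * (l1 - (p * l1 + q * l2)))"
      unfolding p_def q_def l1_def l2_def by (rule step2[OF t1])
    have A2: "?P (Suc t) 2 = q * (1 - eta * (l2 - (p * l1 + q * l2)))"
      unfolding p_def q_def l1_def l2_def by (rule step2[OF t1])
    have H1: "l1 = (if I t = 1 then two_phase_loss T t 1 / ((1-gamma)*p + gamma/2) else 0)"
      unfolding p_def l1_def by (rule lhat)
    have H2: "l2 = (if I t = 2 then two_phase_loss T t 2 / ((1-gamma)*q + gamma/2) else 0)"
      unfolding q_def l2_def by (rule lhat)
    have L: "two_phase_loss T t i = 0 \<or> two_phase_loss T t i = 1" for i
      by (simp add: two_phase_loss_def)
    consider "I t = 1" "two_phase_loss T t 1 = 0" | "I t = 1" "two_phase_loss T t 1 = 1"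
      | "I t = 2" "two_phase_loss T t 2 = 0" | "I t = 2" "two_phase_loss T t 2 = 1"
      using I L by blast
    then show ?thesis
    proof cases
      case 1
      then have "l1 = 0" "l2 = 0" using H1 H2 by auto
      then show ?thesis unfolding A1 A2 using pq by simp
    next
      case 2
      then have "l1 = 1 / ((1-gamma)*p + gamma/2)" "l2 = 0" using H1 H2 by auto
      then show ?thesis unfolding A1 A2 using alg1[OF pq vv, of "(1-gamma)*p + gamma/2"]
        by simp
    next
      case 3
      then have "l1 = 0" "l2 = 0" using H1 H2 by auto
      then show ?thesis unfolding A1 A2 using pq by simp
    next
      case 4
      then have l4: "l2 = 1 / ((1-gamma)*q + gamma/2)" "l1 = 0" using H1 H2 by auto
      have pq': "q \<ge> 0" "p \<ge> 0" "q + p = 1" using pq by auto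
      show ?thesis unfolding A1 A2 using alg1[OF pq' vv, of "(1-gamma)*q + gamma/2"] l4
        by (simp add: algebra_simps)
    qed
  qed
qed

lemma phase2:
  assumes v: "valid_params 2 eta gamma" and I: "\<forall>t. I t \<in> {1, 2}" and tt: "T div 100 < t"
  shows "wsu_pi 2 eta gamma (two_phase_loss T) I (Suc t) 1 \<ge> wsu_pi 2 eta gamma (two_phase_loss T) I t 1
     \<and> (I t = 2 \<and> wsu_pi 2 eta gamma (two_phase_loss T) I t 1 \<le> 1/2 \<longrightarrow>
        wsu_pi 2 eta gamma (two_phase_loss T) I (Suc t) 1 \<ge> wsu_pi 2 eta gamma (two_phase_loss T) I t 1 * (1 + eta))"
proof -
  let ?P = "wsu_pi 2 eta gamma (two_phase_loss T) I"
  have t1: "t \<ge> 1" using tt by simp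
  define p where "p = ?P t 1"
  define q where "q = ?P t 2"
  define l1 where "l1 = wsu_lhat 2 gamma (two_phase_loss T) I (?P t) t 1"
  define l2 where "l2 = wsu_lhat 2 gamma (two_phase_loss T) I (?P t) t 2"
  have pq: "p \<ge> 0" "q \<ge> 0" "p + q = 1" using inv[OF v I, of T t] p_def q_def by auto
  have vv: "0 < eta" "0 < gamma" "gamma < 1/2" using v by (auto simp: valid_params_def)
  have A1: "?P (Suc t) 1 = p * (1 - eta * (l1 - (p * l1 + q * l2)))"
    unfolding p_def q_def l1_def l2_def by (rule step2[OF t1])
  have H1: "l1 = (if I t = 1 then two_phase_loss T t 1 / ((1-gamma)*p + gamma/2) else 0)"
    unfolding p_def l1_def by (rule lhat)
  have H2: "l2 = (if I t = 2 then two_phase_loss T t 2 / ((1-gamma)*q + gamma/2) else 0)"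
    unfolding q_def l2_def by (rule lhat)
  have L1: "two_phase_loss T t 1 = 0" "two_phase_loss T t 2 = 1" using tt by (auto simp: two_phase_loss_def)
  have l1: "l1 = 0" using H1 L1 by simp
  define m where "m = (1-gamma)*q + gamma/2"
  have mpos: "m > 0" unfolding m_def using pq vv by (simp add: add_nonneg_pos)
  show ?thesis
  proof (cases "I t = 2")
    case True
    have l2: "l2 = 1 / m" using H2 L1 True m_def by simp
    have P': "?P (Suc t) 1 = p * (1 + eta * (q / m))" unfolding A1 l1 l2 by simp
    have "eta * (q / m) \<ge> 0" using pq vv mpos by simp
    hence a: "?P (Suc t) 1 \<ge> p" unfolding P' using pq
      by (metis add_increasing2 mult.right_neutral mult_left_mono order_refl)
    have b: "?P (Suc t) 1 \<ge> p * (1 + eta)" if "p \<le> 1/2"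
    proof -
      have "q \<ge> 1/2" using that pq by simp
      hence "m \<le> q" unfolding m_def using vv by (simp add: algebra_simps)
      hence "q / m \<ge> 1" using mpos by simp
      hence "eta * (q / m) \<ge> eta * 1" using vv by (intro mult_left_mono) auto
      thus ?thesis unfolding P' using pq by (intro mult_left_mono) auto
    qed
    show ?thesis using a b p_def by simp
  next
    case False
    have "l2 = 0" using H2 False by simp
    then show ?thesis using A1 l1 p_def False by simp
  qed
qed

lemma mono2:
  assumes v: "valid_params 2 eta gamma" and I: "\<forall>t. I t \<in> {1, 2}" and tt: "T div 100 < a" and ab: "a \<le> b"
  shows "wsu_pi 2 eta gamma (two_phase_loss T) I a 1 \<le> wsu_pi 2 eta gamma (two_phase_loss T) I b 1"
  using ab
proof (induction b rule: dec_induct)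
  case base
  then show ?case by simp
next
  case (step n)
  have "T div 100 < n" using tt step.hyps by simp
  then show ?case using phase2[OF v I, of T n] step.IH by simp
qed

theorem mainTheorem15:
  fixes T t0 m :: nat and eta gamma :: real and I ts :: "nat \<Rightarrow> nat"
  assumes "T \<ge> 1" and "100 dvd T"
    and "valid_params 2 eta gamma"
    and "\<forall>t. I t \<in> {1, 2}"
    and "T div 100 < t0"
    and "0 < wsu_pi 2 eta gamma (two_phase_loss T) I t0 1"
    and "wsu_pi 2 eta gamma (two_phase_loss T) I t0 1 \<le> 1/4"
    and "strict_mono_on {1..m} ts"
    and "t0 \<le> ts 1" and "ts m \<le> T"
    and "\<forall>k\<in>{1..m}. I (ts k) = 2"
    and "real m \<ge> 2 / eta * (1 / (1 - 2 * wsu_pi 2 eta gamma (two_phase_loss T) I t0 1))"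
  shows "wsu_pi 2 eta gamma (two_phase_loss T) I (ts m + 1) 1
           \<ge> 2 * wsu_pi 2 eta gamma (two_phase_loss T) I t0 1"
proof -
  let ?P = "wsu_pi 2 eta gamma (two_phase_loss T) I"
  define p0 where "p0 = ?P t0 1"
  have v: "valid_params 2 eta gamma" and I: "\<forall>t. I t \<in> {1, 2}" using assms by auto
  have eta: "0 < eta" using v by (simp add: valid_params_def)
  have p0: "0 < p0" "p0 \<le> 1/4" using assms p0_def by auto
  have tsge: "ts k \<ge> t0" if "k \<in> {1..m}" for k
  proof -
    have "1 \<in> {1..m}" using that by auto
    hence "ts 1 \<le> ts k" using strict_mono_on_leD[OF assms(8)] that by auto
    thus ?thesis using assms(9) by simp
  qed
  have claim: "k \<le> m \<longrightarrow> 1 \<le> k \<longrightarrow> ?P (ts k + 1) 1 \<ge> min (2*p0) (p0 * (1 + real k * eta))" for k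
  proof (induction k)
    case 0
    then show ?case by simp
  next
    case (Suc k)
    show ?case
    proof (intro impI)
      assume km: "Suc k \<le> m"
      define s where "s = (if k = 0 then t0 else ts k + 1)"
      have LB: "?P s 1 \<ge> min (2*p0) (p0 * (1 + real k * eta))"
      proof (cases "k = 0")
        case True
        then show ?thesis unfolding s_def p0_def using p0 by simp
      next
        case False
        then show ?thesis unfolding s_def using Suc.IH km by simp
      qed
      have sle: "s \<le> ts (Suc k)"
      proof (cases "k = 0")
        case True
        then show ?thesis unfolding s_def using assms(9) by simp
      next
        case False
        have "ts k < ts (Suc k)" using strict_mono_onD[OF assms(8)] False km by auto
        then show ?thesis unfolding s_def using False by simp
      qed
      have sgt: "T div 100 < s" unfolding s_def using assms(5) tsge[of k] km by auto
      have tk: "T div 100 < ts (Suc k)" using tsge[of "Suc k"] km assms(5) by auto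
      have Ik: "I (ts (Suc k)) = 2" using assms(11) km by auto
      define p where "p = ?P (ts (Suc k)) 1"
      have "?P s 1 \<le> p" unfolding p_def using mono2[OF v I sgt sle] .
      hence lb: "p \<ge> min (2*p0) (p0 * (1 + real k * eta))" using LB by simp
      have ph: "?P (Suc (ts (Suc k))) 1 \<ge> p"
        "p \<le> 1/2 \<Longrightarrow> ?P (Suc (ts (Suc k))) 1 \<ge> p * (1 + eta)"
        using phase2[OF v I tk] Ik p_def by auto
      show "?P (ts (Suc k) + 1) 1 \<ge> min (2*p0) (p0 * (1 + real (Suc k) * eta))"
      proof (cases "p \<ge> 2 * p0")
        case True
        then show ?thesis using ph(1) by simp
      next
        case False
        hence pk: "p \<ge> p0 * (1 + real k * eta)" using lb by linarith
        have "p \<le> 1/2" using False p0 by linarith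
        hence "?P (Suc (ts (Suc k))) 1 \<ge> p + eta * p" using ph(2) by (simp add: algebra_simps)
        moreover have "eta * p \<ge> eta * p0"
        proof -
          have "0 \<le> p0 * (real k * eta)" using p0 eta by simp
          hence "p0 \<le> p" using pk by (simp add: algebra_simps)
          thus ?thesis using eta by simp
        qed
        ultimately have "?P (Suc (ts (Suc k))) 1 \<ge> p0 * (1 + real (Suc k) * eta)"
          using pk by (simp add: algebra_simps)
        then show ?thesis by simp
      qed
    qed
  qed
  have d: "1 - 2 * p0 > 0" "1 - 2*p0 \<le> 1" using p0 by auto
  have "1 / (1 - 2 * p0) \<ge> 1" using d by simp
  hence "2 / eta * (1 / (1 - 2 * p0)) \<ge> 2 / eta * 1" using eta by (intro mult_left_mono) auto
  hence mge: "real m \<ge> 2 / eta" using assms(12) p0_def by simp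
  hence "real m * eta \<ge> 2" using eta by (simp add: field_simps)
  hence m1: "m \<ge> 1" using eta by (cases m) auto
  have "p0 * (1 + real m * eta) \<ge> 2 * p0" using `real m * eta \<ge> 2` p0 by simp
  then show ?thesis using claim[of m] m1 p0_def by simp
qed

end
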